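(* For all integers $n\ge0$, $pl_2(5n+3)\equiv0\pmod5$ and $pl_2(5n+4)\equiv0\pmod5$.
   Context: $pl_2(n)$ denotes the number of $2$-component plane partitions of $n$ (plane partitions of $n$ all of whose entries are $\le 2$), with $pl_2(0)=1$; equivalently $\sum_{n\ge0}pl_2(n)q^n=\frac{1}{1-q}\prod_{n=2}^{\infty}(1-q^n)^{-2}$. *)

theory Defs
  imports Main
begin

definition plane_partition :: "(nat \<Rightarrow> nat \<Rightarrow> nat) \<Rightarrow> bool" where
  "plane_partition f \<longleftrightarrow>
     (\<forall>i j. f (Suc i) j \<le> f i j) \<and> (\<forall>i j. f i (Suc j) \<le> f i j) \<and>
     finite {(i, j). f i j \<noteq> 0}"

definition pp_size :: "(nat \<Rightarrow> nat \<Rightarrow> nat) \<Rightarrow> nat" where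
  "pp_size f = (\<Sum>(i, j) \<in> {(i, j). f i j \<noteq> 0}. f i j)"

definition pl2 :: "nat \<Rightarrow> nat" where
  "pl2 n = card {f. plane_partition f \<and> (\<forall>i j. f i j \<le> 2) \<and> pp_size f = n}"

end

theory Submission
  imports Defs "HOL-Computational_Algebra.Formal_Power_Series" "HOL-Computational_Algebra.Polynomial"
begin

unbundle fps_syntax

definition agree :: "nat \<Rightarrow> 'a::comm_ring_1 fps \<Rightarrow> 'a fps \<Rightarrow> bool" where
  "agree m A B \<longleftrightarrow> (\<forall>k\<le>m. A $ k = B $ k)"

lemma agree_refl[simp]: "agree m A A" by (simp add: agree_def)
lemma agree_sym: "agree m A B \<Longrightarrow> agree m B A" by (simp add: agree_def)
lemma agree_trans: "agree m A B \<Longrightarrow> agree m B C \<Longrightarrow> agree m A C" by (simp add: agree_def)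
lemma agree_mono: "agree m A B \<Longrightarrow> k \<le> m \<Longrightarrow> agree k A B" by (simp add: agree_def)

lemma agree_mult: "agree m A A' \<Longrightarrow> agree m B B' \<Longrightarrow> agree m (A*B) (A'*B')"
  unfolding agree_def fps_mult_nth by (auto intro!: sum.cong)

lemma agree_add: "agree m A A' \<Longrightarrow> agree m B B' \<Longrightarrow> agree m (A+B) (A'+B')"
  unfolding agree_def by auto

lemma agree_sum: "(\<And>i. i \<in> S \<Longrightarrow> agree m (f i) (g i)) \<Longrightarrow> agree m (sum f S) (sum g S)"
  unfolding agree_def fps_sum_nth by (auto intro!: sum.cong)

lemma agree_prod: "(\<And>i. i \<in> S \<Longrightarrow> agree m (f i) (g i)) \<Longrightarrow> agree m (prod f S) (prod g S)"
proof (induction S rule: infinite_finite_induct)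
  case (insert x F)
  then show ?case by (simp add: agree_mult)
qed auto

lemma agree_cancel:
  assumes "agree m (A*B) (C*B)" "B $ 0 = 1"
  shows "agree m A C"
  unfolding agree_def
proof (intro allI impI)
  fix k assume "k \<le> m"
  then show "A $ k = C $ k"
  proof (induction k rule: less_induct)
    case (less k)
    have eq: "(A*B) $ k = (C*B) $ k" using assms(1) less.prems by (simp add: agree_def)
    have ins: "{0..k} = insert k {0..<k}" by auto
    have s1: "(A*B) $ k = A $ k + (\<Sum>i=0..<k. A$i * B$(k-i))"
      unfolding fps_mult_nth ins using assms(2) by (simp add: sum.insert)
    have s2: "(C*B) $ k = C $ k + (\<Sum>i=0..<k. C$i * B$(k-i))"
      unfolding fps_mult_nth ins using assms(2) by (simp add: sum.insert)
    have "(\<Sum>i=0..<k. A$i * B$(k-i)) = (\<Sum>i=0..<k. C$i * B$(k-i))"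
      using less by (intro sum.cong) auto
    then show ?case using eq s1 s2 by simp
  qed
qed

lemma agree_Xpow: "agree m A B \<Longrightarrow> agree m (fps_X^e * A) (fps_X^e * B)"
  unfolding agree_def by (simp add: fps_X_power_mult_nth)

lemma agree_Xpow_big: "m < e \<Longrightarrow> agree m (fps_X^e * A) 0"
  unfolding agree_def by (simp add: fps_X_power_mult_nth)

definition Ep :: "nat \<Rightarrow> int fps" where
  "Ep N = (\<Prod>i\<in>{1..N}. 1 - fps_X^i)"

lemma Ep_0[simp]: "Ep 0 = 1" by (simp add: Ep_def)
lemma Ep_Suc: "Ep (Suc N) = Ep N * (1 - fps_X^Suc N)"
  by (simp add: Ep_def atLeastAtMostSuc_conv mult.commute)

lemma Ep_nth0[simp]: "Ep N $ 0 = 1"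
  by (induction N) (simp_all add: Ep_Suc)

lemma agree_Ep: "m \<le> N \<Longrightarrow> agree m (Ep N) (Ep m)"
proof (induction N)
  case 0 then show ?case by simp
next
  case (Suc N)
  show ?case
  proof (cases "m \<le> N")
    case True
    have "agree m (1 - fps_X^Suc N) (1::int fps)"
      unfolding agree_def using True by auto
    then have "agree m (Ep N * (1 - fps_X^Suc N)) (Ep m * 1)"
      using Suc True by (intro agree_mult) auto
    then show ?thesis by (simp add: Ep_Suc)
  next
    case False
    then have "m = Suc N" using Suc by simp
    then show ?thesis by simp
  qed
qed

definition E :: "int fps" where "E = Abs_fps (\<lambda>m. Ep m $ m)"

lemma agree_E: "m \<le> N \<Longrightarrow> agree m E (Ep N)"
  unfolding agree_def E_def using agree_Ep by (auto simp: agree_def)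

lemma E_nth0[simp]: "E $ 0 = 1" by (simp add: E_def)

fun qb :: "'a::comm_ring_1 \<Rightarrow> nat \<Rightarrow> nat \<Rightarrow> 'a" where
  "qb q n 0 = 1"
| "qb q 0 (Suc k) = 0"
| "qb q (Suc n) (Suc k) = qb q n k + q^(Suc k) * qb q n (Suc k)"

fun tr :: "nat \<Rightarrow> nat" where
  "tr 0 = 0" | "tr (Suc k) = tr k + k"

lemma qb_zero: "n < k \<Longrightarrow> qb q n k = 0"
proof (induction n arbitrary: k)
  case 0 then show ?case by (cases k) auto
next
  case (Suc n) then show ?case by (cases k) auto
qed

lemma rothe:
  fixes q y z :: "'a::comm_ring_1"
  shows "(\<Prod>i<m. y + z * q^i) = (\<Sum>j\<le>m. qb q m j * q^(tr j) * z^j * y^(m-j))"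
proof (induction m arbitrary: z)
  case 0 then show ?case by simp
next
  case (Suc m)
  define g where "g j = qb q m j * q^(tr j) * (z*q)^j * y^(m-j)" for j
  have "(\<Prod>i<Suc m. y + z * q^i) = (y + z) * (\<Prod>i<m. y + (z*q) * q^i)"
    by (subst prod.lessThan_Suc_shift) (simp add: mult.assoc mult.commute mult.left_commute)
  also have "\<dots> = (y + z) * (\<Sum>j\<le>m. g j)" using Suc g_def by simp
  also have "\<dots> = (\<Sum>j\<le>m. y * g j) + (\<Sum>j\<le>m. z * g j)"
    by (simp add: distrib_right sum_distrib_left sum.distrib)
  finally have L: "(\<Prod>i<Suc m. y + z * q^i) = (\<Sum>j\<le>m. y * g j) + (\<Sum>j\<le>m. z * g j)" .
  define h where "h j = (if j \<le> m then y * g j else 0)" for j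
  have h0: "(\<Sum>j\<le>m. y * g j) = (\<Sum>j\<le>Suc m. h j)"
    by (simp add: h_def)
  also have "\<dots> = h 0 + (\<Sum>k\<le>m. h (Suc k))" by (rule sum.atMost_Suc_shift)
  finally have A1: "(\<Sum>j\<le>m. y * g j) = y^Suc m + (\<Sum>k\<le>m. q^(Suc k) * qb q m (Suc k) * q^(tr (Suc k)) * z^(Suc k) * y^(m-k))"
  proof -
    assume a: "(\<Sum>j\<le>m. y * g j) = h 0 + (\<Sum>k\<le>m. h (Suc k))"
    have "h 0 = y^Suc m" by (simp add: h_def g_def)
    moreover have "h (Suc k) = q^(Suc k) * qb q m (Suc k) * q^(tr (Suc k)) * z^(Suc k) * y^(m-k)" if "k \<le> m" for k
    proof (cases "k < m")
      case True
      have e: "y^(m-k) = y * y^(m - Suc k)" using True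
        by (metis Suc_diff_Suc power_Suc)
      show ?thesis using True unfolding e
        by (simp add: h_def g_def power_mult_distrib power_add algebra_simps)
    next
      case False
      then have "k = m" using that by simp
      then show ?thesis by (simp add: h_def qb_zero)
    qed
    ultimately show ?thesis using a by simp
  qed
  have A2: "(\<Sum>j\<le>m. z * g j) = (\<Sum>k\<le>m. qb q m k * q^(tr (Suc k)) * z^(Suc k) * y^(m-k))"
    by (rule sum.cong) (simp_all add: g_def power_mult_distrib power_add algebra_simps)
  have R: "(\<Sum>j\<le>Suc m. qb q (Suc m) j * q^(tr j) * z^j * y^(Suc m-j))
      = y^Suc m + (\<Sum>k\<le>m. (qb q m k + q^(Suc k) * qb q m (Suc k)) * q^(tr (Suc k)) * z^(Suc k) * y^(m-k))"
    by (subst sum.atMost_Suc_shift) simp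
  show ?case unfolding L A1 A2 R
    by (simp add: distrib_right sum.distrib algebra_simps)
qed

lemma prod_lessThan_add: "prod f {..<(a::nat)+b} = prod f {..<a} * prod (\<lambda>i. f (a+i)) {..<b}"
  by (induction b) (simp_all add: mult.assoc)

lemma tr_sum: "(\<Sum>i<n. i) = tr n"
  by (induction n) simp_all

lemma tr2: "2 * tr k = k * (k - 1)"
proof (induction k)
  case (Suc k)
  have "2 * tr (Suc k) = k * (k - 1) + 2 * k" using Suc by simp
  also have "\<dots> = Suc k * k" by (cases k) (simp_all add: algebra_simps)
  finally show ?case by simp
qed simp

lemma qb_Ep: "j \<le> N \<Longrightarrow> qb fps_X N j * Ep j * Ep (N - j) = Ep N"
proof (induction N arbitrary: j)
  case 0 then show ?case by simp
next
  case (Suc N)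
  show ?case
  proof (cases j)
    case 0 then show ?thesis by simp
  next
    case (Suc k)
    with Suc.prems have kN: "k \<le> N" by simp
    have t1: "qb fps_X N k * Ep (Suc k) * Ep (Suc N - Suc k) = Ep N * (1 - fps_X^Suc k)"
      using Suc.IH[OF kN] by (simp add: Ep_Suc algebra_simps)
    have t2: "fps_X^Suc k * qb fps_X N (Suc k) * Ep (Suc k) * Ep (Suc N - Suc k)
             = Ep N * (fps_X^Suc k - fps_X^Suc N)"
    proof (cases "k < N")
      case True
      then have d: "Suc N - Suc k = Suc (N - Suc k)" by simp
      have ih: "qb fps_X N (Suc k) * Ep (Suc k) * Ep (N - Suc k) = Ep N" using Suc.IH True by simp
      have d2: "Suc (N - Suc k) = N - k" using True by simp
      have xx: "fps_X^Suc k * fps_X^(N-k) = (fps_X^Suc N :: int fps)"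
        using True by (simp add: power_add[symmetric])
      have "fps_X^Suc k * qb fps_X N (Suc k) * Ep (Suc k) * Ep (Suc N - Suc k)
          = (qb fps_X N (Suc k) * Ep (Suc k) * Ep (N - Suc k)) * (fps_X^Suc k * (1 - fps_X^(N-k)))"
        unfolding d unfolding Ep_Suc[of "N - Suc k"] unfolding d2 by (simp only: mult_ac)
      also have "\<dots> = Ep N * (fps_X^Suc k - fps_X^Suc k * fps_X^(N-k))"
        unfolding ih by (simp add: right_diff_distrib)
      finally show ?thesis unfolding xx .
    next
      case False
      then have "k = N" using kN by simp
      then show ?thesis by (simp add: qb_zero)
    qed
    have "qb fps_X (Suc N) j * Ep j * Ep (Suc N - j)
        = qb fps_X N k * Ep (Suc k) * Ep (Suc N - Suc k)
          + fps_X^Suc k * qb fps_X N (Suc k) * Ep (Suc k) * Ep (Suc N - Suc k)"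
      using Suc by (simp add: algebra_simps)
    also have "\<dots> = Ep N * (1 - fps_X^Suc N)" unfolding t1 t2 by (simp add: algebra_simps)
    finally show ?thesis by (simp add: Ep_Suc)
  qed
qed

definition ee :: "nat \<Rightarrow> nat \<Rightarrow> nat" where
  "ee n j = (if j \<le> n then tr (n+1-j) else tr (j - n))"

lemma tr2i: "2 * int (tr k) = int k * (int k - 1)"
proof -
  have "int (2 * tr k) = int (k * (k - 1))" by (simp only: tr2)
  then show ?thesis by (cases k) (simp_all add: algebra_simps)
qed

lemma ee_exp: assumes "j \<le> 2*n+1"
  shows "tr j + n*(2*n+1-j) = tr n + n + n*n + ee n j"
proof -
  have "2 * int (tr j + n*(2*n+1-j)) = 2 * int (tr n + n + n*n + ee n j)"
  proof (cases "j \<le> n")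
    case True
    then have "ee n j = tr (n+1-j)" by (simp add: ee_def)
    moreover have "int (n+1-j) = int n + 1 - int j" "int (2*n+1-j) = 2*int n + 1 - int j"
      using True by auto
    ultimately show ?thesis
      by (simp add: distrib_left tr2i) (simp add: algebra_simps)
  next
    case False
    then have "ee n j = tr (j - n)" by (simp add: ee_def)
    moreover have "int (j - n) = int j - int n" "int (2*n+1-j) = 2*int n + 1 - int j"
      using False assms by auto
    ultimately show ?thesis
      by (simp add: distrib_left tr2i) (simp add: algebra_simps)
  qed
  then have "int (tr j + n*(2*n+1-j)) = int (tr n + n + n*n + ee n j)"
    using mult_left_cancel[of "2::int"] by (metis zero_neq_numeral)
  then show ?thesis by (simp only: of_nat_eq_iff)
qed

definition QQ :: "int fps poly" where "QQ = [:fps_X:]"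
definition WW :: "int fps poly" where "WW = [:0, 1:]"
definition HH :: "nat \<Rightarrow> int fps poly" where
  "HH n = (\<Prod>i<n. (QQ^Suc i - WW) * (1 - WW * QQ^Suc i))"

lemma qb_const: "qb [:x:] n k = [:qb x n k:]"
proof (induction n arbitrary: k)
  case 0 then show ?case by (cases k) simp_all
next
  case (Suc n) then show ?case by (cases k) (simp_all add: poly_const_pow)
qed

lemma QQ_pow: "QQ^a = [:fps_X^a:]" by (simp add: QQ_def poly_const_pow)

lemma lhs_split:
  "(\<Prod>i<2*n+1. QQ^n + (-WW) * QQ^i) = QQ^(tr n + n + n*n) * ((1 - WW) * HH n)"
proof -
  define f where "f i = QQ^n + (-WW) * QQ^i" for i
  have "(\<Prod>i<2*n+1. f i) = (\<Prod>i<n. f i) * (\<Prod>i<Suc n. f (n+i))"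
    using prod_lessThan_add[of f n "Suc n"] by (simp add: mult_2)
  also have "(\<Prod>i<Suc n. f (n+i)) = f n * (\<Prod>i<n. f (n + Suc i))"
    by (subst prod.lessThan_Suc_shift) simp
  also have "(\<Prod>i<n. f i) = (\<Prod>i<n. QQ^i * (QQ^(n-i) - WW))"
  proof (rule prod.cong)
    fix i assume "i \<in> {..<n}"
    then have "QQ^n = QQ^i * QQ^(n-i)" by (simp add: power_add[symmetric])
    then show "f i = QQ^i * (QQ^(n-i) - WW)" by (simp add: f_def algebra_simps)
  qed simp
  also have "\<dots> = QQ^(tr n) * (\<Prod>i<n. QQ^(Suc i) - WW)"
  proof -
    have "(\<Prod>i<n. QQ^i * (QQ^(n-i) - WW)) = (\<Prod>i<n. QQ^i) * (\<Prod>i<n. QQ^(n-i) - WW)"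
      by (rule prod.distrib)
    moreover have "(\<Prod>i<n. QQ^i) = QQ^(tr n)"
      using power_sum[of QQ "\<lambda>i. i" "{..<n}", symmetric] by (simp add: tr_sum)
    moreover have "(\<Prod>i<n. QQ^(n-i) - WW) = (\<Prod>i<n. QQ^(Suc i) - WW)"
      using prod.nat_diff_reindex[of "\<lambda>i. QQ^(Suc i) - WW" n]
      by (simp add: Suc_diff_Suc)
    ultimately show ?thesis by simp
  qed
  also have "f n = QQ^n * (1 - WW)" by (simp add: f_def algebra_simps)
  also have "(\<Prod>i<n. f (n + Suc i)) = (\<Prod>i<n. QQ^n * (1 - WW * QQ^Suc i))"
    by (rule prod.cong) (simp_all add: f_def algebra_simps power_add)
  also have "\<dots> = QQ^(n*n) * (\<Prod>i<n. 1 - WW * QQ^Suc i)"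
    by (simp add: prod.distrib power_mult)
  finally show ?thesis unfolding HH_def prod.distrib f_def
    by (simp add: power_add algebra_simps)
qed

lemma QQ_ne0: "QQ^k \<noteq> 0"
  by (simp add: QQ_def)

lemma neg1_pow_poly: "((-1)::'a::comm_ring_1 poly)^j = [:(-1)^j:]"
  by (induction j) (simp_all add: mult.commute)

lemma tp: "(1 - WW) * HH n = (\<Sum>j\<le>2*n+1. smult ((-1)^j * fps_X^(ee n j) * qb fps_X (2*n+1) j) (WW^j))"
proof -
  let ?E = "tr n + n + n*n"
  have "QQ^?E * ((1 - WW) * HH n) = (\<Prod>i<2*n+1. QQ^n + (-WW) * QQ^i)"
    by (rule lhs_split[symmetric])
  also have "\<dots> = (\<Sum>j\<le>2*n+1. qb QQ (2*n+1) j * QQ^(tr j) * (-WW)^j * (QQ^n)^(2*n+1-j))"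
    by (rule rothe)
  also have "\<dots> = (\<Sum>j\<le>2*n+1. QQ^?E * smult ((-1)^j * fps_X^(ee n j) * qb fps_X (2*n+1) j) (WW^j))"
  proof (rule sum.cong)
    fix j assume "j \<in> {..2*n+1}"
    then have ex: "tr j + n*(2*n+1-j) = ?E + ee n j" by (intro ee_exp) simp
    have "qb QQ (2*n+1) j * QQ^(tr j) * (-WW)^j * (QQ^n)^(2*n+1-j)
        = qb QQ (2*n+1) j * QQ^(tr j + n*(2*n+1-j)) * (-WW)^j"
      by (simp add: power_add power_mult[symmetric] algebra_simps)
    also have "\<dots> = QQ^?E * ([:(-1)^j * fps_X^(ee n j) * qb fps_X (2*n+1) j:] * WW^j)"
      unfolding ex power_add
      by (simp add: QQ_def qb_const poly_const_pow power_minus[of WW] neg1_pow_poly algebra_simps)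
    finally show "qb QQ (2*n+1) j * QQ^(tr j) * (-WW)^j * (QQ^n)^(2*n+1-j)
        = QQ^?E * smult ((-1)^j * fps_X^(ee n j) * qb fps_X (2*n+1) j) (WW^j)"
      by simp
  qed simp
  also have "\<dots> = QQ^?E * (\<Sum>j\<le>2*n+1. smult ((-1)^j * fps_X^(ee n j) * qb fps_X (2*n+1) j) (WW^j))"
    by (simp only: sum_distrib_left)
  finally show ?thesis using mult_left_cancel[OF QQ_ne0] by blast
qed

lemma pderiv_sum': "pderiv (sum f A) = (\<Sum>x\<in>A. pderiv (f x))"
  by (induction A rule: infinite_finite_induct) (simp_all add: pderiv_add)

lemma Ep_alt: "Ep n = (\<Prod>i<n. 1 - fps_X^Suc i)"
  by (induction n) (simp_all add: Ep_Suc)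

lemma poly_pderiv_WW: "poly (pderiv (WW^j)) 1 = of_nat j"
  by (cases j) (simp_all add: pderiv_power WW_def pderiv_pCons)

lemma poly_pderiv_sum: "poly (pderiv (\<Sum>j\<in>A. smult (c j) (WW^j))) 1 = (\<Sum>j\<in>A. of_nat j * c j)"
  by (simp only: pderiv_sum' pderiv_smult poly_sum poly_smult poly_pderiv_WW mult.commute)

lemma tpd: "(\<Sum>j\<le>2*n+1. of_nat j * ((-1)^j * fps_X^(ee n j) * qb fps_X (2*n+1) j)) = - ((-1)^n * Ep n ^ 2)"
proof -
  have pW: "pderiv WW = 1" by (simp add: WW_def pderiv_pCons)
  have "poly (pderiv ((1 - WW) * HH n)) 1 = - poly (HH n) 1"
    by (simp add: pderiv_mult pderiv_diff pW) (simp add: WW_def)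
  also have "poly (HH n) 1 = (\<Prod>i<n. (fps_X^Suc i - 1) * (1 - fps_X^Suc i))"
    by (simp add: HH_def poly_prod QQ_pow WW_def del: power_Suc) (intro prod.cong refl, simp add: algebra_simps)
  also have "\<dots> = (\<Prod>i<n. (-1) * (1 - fps_X^Suc i)^2)"
    by (rule prod.cong) (simp_all add: power2_eq_square algebra_simps)
  also have "\<dots> = (-1)^n * Ep n ^ 2"
    by (simp only: prod.distrib prod_constant card_lessThan) (simp add: Ep_alt power2_eq_square prod.distrib)
  finally have L: "poly (pderiv ((1 - WW) * HH n)) 1 = - ((-1)^n * Ep n ^ 2)" .
  have "poly (pderiv (\<Sum>j\<le>2*n+1. smult ((-1)^j * fps_X^(ee n j) * qb fps_X (2*n+1) j) (WW^j))) 1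
      = (\<Sum>j\<le>2*n+1. of_nat j * ((-1)^j * fps_X^(ee n j) * qb fps_X (2*n+1) j))"
    by (rule poly_pderiv_sum)
  then show ?thesis using L tp by simp
qed

lemma tr_ge: "k \<le> tr k + 1"
  by (induction k) auto

lemma tr_smono: "strict_mono (\<lambda>k. tr (Suc k))"
  unfolding strict_mono_Suc_iff by simp

lemma tr_inj: "tr (Suc a) = tr (Suc b) \<Longrightarrow> a = b"
  using strict_mono_eq[OF tr_smono] by blast

lemma ee_small:
  assumes "ee n j \<le> m" "n = 2*m+1" "j \<le> 2*n+1"
  shows "m < j \<and> m < 2*n+1-j"
proof (cases "j \<le> n")
  case True
  then have "tr (n+1-j) \<le> m" using assms by (simp add: ee_def)
  then have "n - j \<le> m" using tr_ge[of "n+1-j"] by simp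
  then show ?thesis using assms True by arith
next
  case False
  then have "tr (j - n) \<le> m" using assms by (simp add: ee_def)
  then have "j - n \<le> m + 1" using tr_ge[of "j-n"] by simp
  then show ?thesis using assms False by arith
qed

lemma qbE_agree:
  assumes "m < j" "m < N - j" "j \<le> N"
  shows "agree m (qb fps_X N j * E) 1"
proof -
  have "agree m (qb fps_X N j * Ep j * Ep (N-j)) (Ep N)" using qb_Ep[OF assms(3)] by simp
  moreover have "agree m (qb fps_X N j * Ep j * Ep (N-j)) (qb fps_X N j * E * E)"
    using assms by (intro agree_mult agree_refl agree_sym[OF agree_E]) simp_all
  moreover have "agree m (Ep N) E" using assms by (intro agree_sym[OF agree_E]) simp
  ultimately have "agree m ((qb fps_X N j * E) * E) (1 * E)"
    by (metis agree_sym agree_trans mult_1)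
  then show ?thesis by (rule agree_cancel) simp
qed

lemma fps_neg1_pow: "((-1)^n :: int fps) = fps_const ((-1)^n)"
  by (induction n) (simp_all add: fps_const_mult[symmetric] fps_const_neg)

lemma coeff_cX: "((of_nat j * (-1)^j * fps_X^e) :: int fps) $ m = (if e = m then int j * (-1)^j else 0)"
proof -
  have "(of_nat j * (-1)^j :: int fps) = fps_const (int j * (-1)^j)"
    unfolding fps_neg1_pow fps_of_nat[symmetric] fps_const_mult ..
  then show ?thesis by (simp add: fps_mult_left_const_nth)
qed

lemma neg1_pow_nth: "(((-1)^n * A) :: int fps) $ m = (-1)^n * A $ m"
  unfolding fps_neg1_pow by (simp add: fps_mult_left_const_nth)

lemma E3_coeff:
  assumes n: "n = 2*m+1"
  shows "- ((-1)^n * (E^3 $ m)) = (\<Sum>j | j \<le> 2*n+1 \<and> ee n j = m. of_nat j * (-1)^j)"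
proof -
  let ?N = "2*n+1"
  have "agree m (E * (\<Sum>j\<le>?N. of_nat j * ((-1)^j * fps_X^(ee n j) * qb fps_X ?N j)))
                (\<Sum>j\<le>?N. of_nat j * (-1)^j * fps_X^(ee n j))"
    unfolding sum_distrib_left
  proof (rule agree_sum)
    fix j assume "j \<in> {..?N}"
    then have jN: "j \<le> ?N" by simp
    show "agree m (E * (of_nat j * ((-1)^j * fps_X^(ee n j) * qb fps_X ?N j)))
                  (of_nat j * (-1)^j * fps_X^(ee n j))"
    proof (cases "ee n j \<le> m")
      case True
      with ee_small[OF True n jN] have "m < j" "m < ?N - j" by auto
      then have a: "agree m (qb fps_X ?N j * E) 1" using jN by (intro qbE_agree) auto
      have "agree m (fps_X^(ee n j) * (of_nat j * (-1)^j * (qb fps_X ?N j * E)))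
                    (fps_X^(ee n j) * (of_nat j * (-1)^j * 1))"
        by (intro agree_Xpow agree_mult agree_refl a)
      then show ?thesis by (simp add: algebra_simps)
    next
      case False
      then have a1: "agree m (fps_X^(ee n j) * (E * of_nat j * (-1)^j * qb fps_X ?N j)) 0"
                and a2: "agree m (fps_X^(ee n j) * (of_nat j * (-1)^j)) 0"
        by (intro agree_Xpow_big; simp)+
      have e1: "E * (of_nat j * ((-1)^j * fps_X^(ee n j) * qb fps_X ?N j))
              = fps_X^(ee n j) * (E * of_nat j * (-1)^j * qb fps_X ?N j)" by (simp add: algebra_simps)
      have e2: "of_nat j * (-1)^j * fps_X^(ee n j) = fps_X^(ee n j) * (of_nat j * (-1)^j :: int fps)"
        by (simp only: mult.commute)
      show ?thesis unfolding e1 e2 using a1 a2 by (meson agree_sym agree_trans)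
    qed
  qed
  moreover have "E * (\<Sum>j\<le>?N. of_nat j * ((-1)^j * fps_X^(ee n j) * qb fps_X ?N j))
       = - ((-1)^n * (Ep n ^2 * E))"
    unfolding tpd by (simp add: algebra_simps)
  moreover have "agree m (Ep n ^ 2 * E) (E^3)"
  proof -
    have "agree m (Ep n * Ep n * E) (E * E * E)" using n
      by (intro agree_mult agree_refl agree_sym[OF agree_E]) simp_all
    then show ?thesis by (simp add: power2_eq_square power3_eq_cube)
  qed
  ultimately have "agree m (- ((-1)^n * E^3)) (\<Sum>j\<le>?N. of_nat j * (-1)^j * fps_X^(ee n j))"
  proof -
    assume a: "agree m (E * (\<Sum>j\<le>?N. of_nat j * ((-1)^j * fps_X^(ee n j) * qb fps_X ?N j)))
                (\<Sum>j\<le>?N. of_nat j * (-1)^j * fps_X^(ee n j))"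
      and b: "E * (\<Sum>j\<le>?N. of_nat j * ((-1)^j * fps_X^(ee n j) * qb fps_X ?N j))
       = - ((-1)^n * (Ep n ^2 * E))"
      and c: "agree m (Ep n ^ 2 * E) (E^3)"
    have "agree m (- ((-1)^n) * (Ep n ^2 * E)) (- ((-1)^n) * E^3)"
      by (intro agree_mult agree_refl c)
    then have "agree m (- ((-1)^n * (Ep n ^2 * E))) (- ((-1)^n * E^3))" by simp
    moreover have "agree m (- ((-1)^n * (Ep n ^2 * E))) (\<Sum>j\<le>?N. of_nat j * (-1)^j * fps_X^(ee n j))"
      using a unfolding b .
    ultimately show ?thesis by (rule agree_trans[OF agree_sym])
  qed
  then have "(- ((-1)^n * E^3)) $ m = (\<Sum>j\<le>?N. of_nat j * (-1)^j * fps_X^(ee n j)) $ m"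
    by (simp add: agree_def)
  also have "\<dots> = (\<Sum>j\<le>?N. if ee n j = m then of_nat j * (-1)^j else 0)"
    unfolding fps_sum_nth coeff_cX by (rule refl)
  also have "\<dots> = (\<Sum>j | j \<le> ?N \<and> ee n j = m. of_nat j * (-1)^j)"
    by (simp add: sum.If_cases Collect_conj_eq atMost_def Int_commute)
  finally show ?thesis by (simp add: neg1_pow_nth)
qed

lemma tri_mod5:
  assumes "2 * m = (k+1) * k" "m mod 5 \<in> {2,3,4}"
  shows "(5::nat) dvd 2*k+1"
proof -
  define r where "r = k mod 5"
  have r5: "r < 5" by (simp add: r_def)
  have "(2*m) mod 5 = ((k+1)*k) mod 5" using assms(1) by simp
  also have "\<dots> = (((k+1) mod 5) * (k mod 5)) mod 5" by (simp add: mod_mult_eq)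
  also have "(k+1) mod 5 = (r+1) mod 5" unfolding r_def by presburger
  finally have eq: "(2*m) mod 5 = (((r+1) mod 5) * r) mod 5" by (simp add: r_def)
  have "r = 2"
  proof -
    have "r = 0 \<or> r = 1 \<or> r = 2 \<or> r = 3 \<or> r = 4" using r5 by auto
    then show ?thesis using eq assms(2) by auto presburger+
  qed
  then show ?thesis unfolding r_def by presburger
qed

lemma E3_mod5:
  assumes "m mod 5 \<in> {2,3,4}"
  shows "(5::int) dvd E^3 $ m"
proof -
  define n where "n = 2*m+1"
  define A where "A = {j. j \<le> 2*n+1 \<and> ee n j = m}"
  have key: "- ((-1)^n * (E^3 $ m)) = (\<Sum>j\<in>A. of_nat j * (-1)^j)"
    unfolding A_def using E3_coeff[OF n_def] by simp
  have "(5::int) dvd (\<Sum>j\<in>A. of_nat j * (-1)^j)"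
  proof (cases "\<exists>k. tr (Suc k) = m")
    case False
    have "A = {}"
    proof -
      { fix j assume "j \<in> A"
        then have j: "j \<le> 2*n+1" "ee n j = m" by (auto simp: A_def)
        have False
        proof (cases "j \<le> n")
          case True
          then have "tr (Suc (n - j)) = m" using j by (simp add: ee_def Suc_diff_le)
          then show False using False by blast
        next
          case c: False
          then have "j - n = Suc (j - n - 1)" by simp
          then have "tr (Suc (j - n - 1)) = m" using j c by (simp add: ee_def)
          then show False using False by blast
        qed }
      then show ?thesis by blast
    qed
    then show ?thesis by simp
  next
    case True
    then obtain k where k: "tr (Suc k) = m" by blast
    have km: "k \<le> m" using tr_ge[of "Suc k"] k by simp
    then have kn: "k < n" by (simp add: n_def)
    have Aeq: "A = {n - k, n + 1 + k}"
    proof (intro set_eqI iffI)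
      fix j assume "j \<in> A"
      then have j: "j \<le> 2*n+1" "ee n j = m" by (auto simp: A_def)
      show "j \<in> {n - k, n + 1 + k}"
      proof (cases "j \<le> n")
        case True
        then have "tr (Suc (n - j)) = tr (Suc k)" using j k by (simp add: ee_def Suc_diff_le)
        then have "n - j = k" by (rule tr_inj)
        then show ?thesis using True by auto
      next
        case c: False
        then have "j - n = Suc (j - n - 1)" by simp
        then have "tr (Suc (j - n - 1)) = tr (Suc k)" using j c k by (simp add: ee_def)
        then have "j - n - 1 = k" by (rule tr_inj)
        then show ?thesis using c by auto
      qed
    next
      fix j assume "j \<in> {n - k, n + 1 + k}"
      then show "j \<in> A"
      proof
        assume "j = n - k"
        then show ?thesis using kn k by (auto simp: A_def ee_def Suc_diff_le)
      next
        assume "j \<in> {n + 1 + k}"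
        then have "j = n + 1 + k" by simp
        then show ?thesis using kn k by (auto simp: A_def ee_def)
      qed
    qed
    define d where "d = n - k"
    have nd: "n + 1 + k = d + (2*k+1)" using kn by (simp add: d_def)
    have A2: "A = {d, d + (2*k+1)}" unfolding Aeq nd d_def by simp
    have "(\<Sum>j\<in>A. of_nat j * (-1::int)^j) = of_nat d * (-1)^d + of_nat (d + (2*k+1)) * (-1)^(d + (2*k+1))"
      unfolding A2 by simp
    also have "\<dots> = - (of_nat (2*k+1) * (-1)^d)"
      by (simp add: power_add algebra_simps)
    finally have S: "(\<Sum>j\<in>A. of_nat j * (-1::int)^j) = - (of_nat (2*k+1) * (-1)^d)" .
    have "2 * m = (k+1) * k" using tr2[of "Suc k"] k by simp
    then have "(5::nat) dvd 2*k+1" using tri_mod5 assms by blast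
    then have "(5::int) dvd of_nat (2*k+1)" by (metis of_nat_dvd_iff of_nat_numeral)
    then show ?thesis unfolding S by simp
  qed
  then have "(5::int) dvd - ((-1)^n * (E^3 $ m))" unfolding key .
  then have "(5::int) dvd ((-1)^n * (E^3 $ m))" by simp
  then show ?thesis by (cases "even n") simp_all
qed

definition sp5 :: "int fps \<Rightarrow> bool" where
  "sp5 A \<longleftrightarrow> (\<forall>m. \<not> 5 dvd m \<longrightarrow> 5 dvd A $ m)"

lemma sp5_mult: assumes "sp5 A" "sp5 B" shows "sp5 (A * B)"
  unfolding sp5_def
proof (intro allI impI)
  fix m :: nat assume m: "\<not> 5 dvd m"
  have "(5::int) dvd (\<Sum>i=0..m. A$i * B$(m-i))"
  proof (rule dvd_sum)
    fix i assume "i \<in> {0..m}"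
    then have "\<not> 5 dvd i \<or> \<not> 5 dvd (m - i)" using m by auto presburger
    then show "(5::int) dvd A$i * B$(m-i)" using assms unfolding sp5_def by auto
  qed
  then show "5 dvd (A*B) $ m" by (simp add: fps_mult_nth)
qed

lemma sp5_pow5: "sp5 ((1 - fps_X^i)^5)"
proof -
  define Y :: "int fps" where "Y = fps_X^i"
  define C where "C = - Y + 2 * Y^2 - 2 * Y^3 + Y^4"
  have id: "(1 - Y)^5 = 1 - Y^5 + 5 * C"
    unfolding C_def by (simp add: power2_eq_square power3_eq_cube numeral_eq_Suc algebra_simps)
  have "Y^5 = fps_X^(5*i)" by (simp add: Y_def power_mult[symmetric] mult.commute)
  show ?thesis unfolding sp5_def
  proof (intro allI impI)
    fix m :: nat assume m: "\<not> 5 dvd m"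
    have "(1 - Y^5) $ m = 0" using m \<open>Y^5 = fps_X^(5*i)\<close> by auto
    moreover have "(5 * C) $ m = 5 * C $ m"
      by (metis fps_mult_left_const_nth fps_numeral_fps_const)
    ultimately have "((1 - Y)^5) $ m = 5 * C $ m" unfolding id by (simp only: fps_add_nth)
    then show "(5::int) dvd ((1 - fps_X^i)^5) $ m"
      unfolding Y_def[symmetric] by simp
  qed
qed

lemma sp5_Ep: "sp5 (Ep N ^ 5)"
proof (induction N)
  case 0 then show ?case by (simp add: sp5_def)
next
  case (Suc N)
  then show ?case unfolding Ep_Suc power_mult_distrib by (intro sp5_mult sp5_pow5)
qed

lemma sp5_E: "sp5 (E^5)"
  unfolding sp5_def
proof (intro allI impI)
  fix m :: nat assume "\<not> 5 dvd m"
  have "agree m (E^5) (Ep m ^ 5)"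
    using agree_E[of m m] by (simp add: agree_mult power_def)
  then have "E^5 $ m = Ep m ^ 5 $ m" by (simp add: agree_def)
  then show "5 dvd E^5 $ m" using sp5_Ep \<open>\<not> 5 dvd m\<close> by (simp add: sp5_def)
qed

lemma E5_0: "E^5 $ 0 = 1" by (simp add: fps_nth_power_0)

lemma final_mod5:
  assumes QE: "Q * E^2 = 1 - fps_X"
  shows "m mod 5 \<in> {3,4} \<Longrightarrow> (5::int) dvd Q $ m"
proof (induction m rule: less_induct)
  case (less m)
  have QE5: "Q * E^5 = (1 - fps_X) * E^3"
  proof -
    have "Q * E^5 = (Q * E^2) * E^3" by (simp add: power_add[symmetric] mult.assoc)
    then show ?thesis using QE by simp
  qed
  have m1: "m \<ge> 1" using less.prems by auto
  have rhs: "((1 - fps_X) * E^3) $ m = E^3 $ m - E^3 $ (m - 1)"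
    using m1 by (simp add: algebra_simps fps_X_mult_nth)
  have "(5::int) dvd E^3 $ m" using less.prems by (intro E3_mod5) auto
  moreover have "(5::int) dvd E^3 $ (m-1)"
  proof -
    obtain m' where "m = Suc m'" using m1 by (cases m) auto
    then have "(m - 1) mod 5 \<in> {2,3,4}" using less.prems by (auto simp: mod_Suc split: if_splits)
    then show ?thesis by (intro E3_mod5)
  qed
  ultimately have d1: "(5::int) dvd (Q * E^5) $ m" unfolding QE5 rhs by simp
  have ins: "{0..m} = insert m {0..<m}" by auto
  have split: "(Q * E^5) $ m = Q $ m + (\<Sum>i=0..<m. Q$i * E^5 $ (m-i))"
    unfolding fps_mult_nth ins by (simp add: E5_0)
  have "(5::int) dvd (\<Sum>i=0..<m. Q$i * E^5 $ (m-i))"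
  proof (rule dvd_sum)
    fix i assume i: "i \<in> {0..<m}"
    show "(5::int) dvd Q$i * E^5 $ (m-i)"
    proof (cases "5 dvd (m - i)")
      case True
      then have "i mod 5 \<in> {3,4}" using less.prems i by auto presburger+
      then have "(5::int) dvd Q $ i" using less.IH i by auto
      then show ?thesis by simp
    next
      case False
      then show ?thesis using sp5_E by (simp add: sp5_def)
    qed
  qed
  then show ?case using d1 split by (simp add: dvd_add_left_iff)
qed

definition isp :: "(nat \<Rightarrow> nat) \<Rightarrow> bool" where
  "isp l \<longleftrightarrow> (\<forall>i. l (Suc i) \<le> l i) \<and> (\<exists>N. l N = 0)"

definition ps :: "(nat \<Rightarrow> nat) \<Rightarrow> nat" where
  "ps l = sum l {i. l i \<noteq> 0}"

lemma isp_mono: "isp l \<Longrightarrow> i \<le> j \<Longrightarrow> l j \<le> l i"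
  unfolding isp_def by (metis lift_Suc_antimono_le)

lemma isp_zero: "isp l \<Longrightarrow> \<exists>N. \<forall>i\<ge>N. l i = 0"
proof -
  assume a: "isp l"
  then obtain N where "l N = 0" unfolding isp_def by blast
  then have "\<forall>i\<ge>N. l i = 0" using isp_mono[OF a] by (metis le_zero_eq)
  then show ?thesis by blast
qed

lemma ps_lessThan: "(\<And>i. N \<le> i \<Longrightarrow> l i = 0) \<Longrightarrow> ps l = sum l {..<N}"
proof -
  assume a: "\<And>i. N \<le> i \<Longrightarrow> l i = 0"
  have sub: "{i. l i \<noteq> 0} \<subseteq> {..<N}"
  proof
    fix x assume "x \<in> {i. l i \<noteq> 0}"
    then have "l x \<noteq> 0" by simp
    then have "\<not> N \<le> x" using a[of x] by auto
    then show "x \<in> {..<N}" by simp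
  qed
  have "sum l {..<N} = sum l {i. l i \<noteq> 0}"
    by (rule sum.mono_neutral_right[OF _ sub]) auto
  then show ?thesis by (simp add: ps_def)
qed

lemma isp_le_ps: "isp l \<Longrightarrow> l i \<le> ps l"
proof -
  assume "isp l"
  then obtain N where N: "\<forall>i\<ge>N. l i = 0" using isp_zero by blast
  then have "ps l = sum l {..<max N (Suc i)}" by (intro ps_lessThan) auto
  moreover have "l i \<le> sum l {..<max N (Suc i)}" by (rule member_le_sum) auto
  ultimately show ?thesis by simp
qed

lemma isp_big_zero: "isp l \<Longrightarrow> ps l \<le> i \<Longrightarrow> l i = 0"
proof (rule ccontr)
  assume a: "isp l" "ps l \<le> i" "l i \<noteq> 0"
  obtain N where N: "\<forall>i\<ge>N. l i = 0" using isp_zero[OF a(1)] by blast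
  have ps: "ps l = sum l {..<max N (Suc i)}" using N by (intro ps_lessThan) auto
  have "(\<Sum>j\<in>{..i}. 1) \<le> (\<Sum>j\<in>{..i}. l j)"
  proof (rule sum_mono)
    fix j assume "j \<in> {..i}"
    then have "l i \<le> l j" using isp_mono[OF a(1)] by simp
    then show "1 \<le> l j" using a(3) by simp
  qed
  also have "\<dots> \<le> sum l {..<max N (Suc i)}" by (rule sum_mono2) auto
  finally show False using a(2) ps by simp
qed

definition PT :: "nat \<Rightarrow> (nat \<Rightarrow> nat) set" where
  "PT n = {l. isp l \<and> ps l = n}"

lemma PT_sub: "PT n \<subseteq> {f. \<forall>x. (x \<in> {..<n} \<longrightarrow> f x \<in> {..n}) \<and> (x \<notin> {..<n} \<longrightarrow> f x = 0)}"
proof (rule subsetI)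
  fix f assume "f \<in> PT n"
  then have f: "isp f" "ps f = n" by (auto simp: PT_def)
  have "\<forall>x. f x \<le> n" using isp_le_ps[OF f(1)] f(2) by simp
  moreover have "\<forall>x. n \<le> x \<longrightarrow> f x = 0" using isp_big_zero[OF f(1)] f(2) by simp
  ultimately show "f \<in> {f. \<forall>x. (x \<in> {..<n} \<longrightarrow> f x \<in> {..n}) \<and> (x \<notin> {..<n} \<longrightarrow> f x = 0)}"
    by (simp add: not_less)
qed

lemma finite_PT: "finite (PT n)"
  by (rule finite_subset[OF PT_sub]) (rule finite_set_of_finite_funs; simp)

lemma sum_lessThan_add: "sum f {..<(a::nat)+b} = sum f {..<a} + sum (\<lambda>i. f (a+i)) {..<b}"
  by (induction b) (simp_all add: add.assoc)

definition cns :: "nat \<Rightarrow> (nat \<Rightarrow> nat) \<Rightarrow> (nat \<Rightarrow> nat)" where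
  "cns k m = (\<lambda>i. case i of 0 \<Rightarrow> k | Suc j \<Rightarrow> m j)"

lemma cns_0[simp]: "cns k m 0 = k" and cns_Suc[simp]: "cns k m (Suc j) = m j"
  by (simp_all add: cns_def)

lemma cns_shift: "cns (l 0) (\<lambda>i. l (Suc i)) = l"
  by (rule ext) (simp add: cns_def split: nat.split)

lemma isp_shift: "isp l \<Longrightarrow> isp (\<lambda>i. l (Suc i))"
  unfolding isp_def by (metis isp_def isp_mono le_zero_eq Suc_n_not_le_n nat_le_linear)

lemma isp_cns: "isp m \<Longrightarrow> m 0 \<le> k \<Longrightarrow> isp (cns k m)"
  unfolding isp_def
proof (intro conjI allI)
  assume a: "(\<forall>i. m (Suc i) \<le> m i) \<and> (\<exists>N. m N = 0)" "m 0 \<le> k"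
  fix i show "cns k m (Suc i) \<le> cns k m i" using a by (cases i) auto
next
  assume a: "(\<forall>i. m (Suc i) \<le> m i) \<and> (\<exists>N. m N = 0)" "m 0 \<le> k"
  then obtain N where "m N = 0" by blast
  then have "cns k m (Suc N) = 0" by simp
  then show "\<exists>N. cns k m N = 0" by blast
qed

lemma ps_cns: "isp m \<Longrightarrow> ps (cns k m) = k + ps m"
proof -
  assume a: "isp m"
  obtain N where N: "\<forall>i\<ge>N. m i = 0" using isp_zero[OF a] by blast
  have "ps m = sum m {..<N}" using N by (intro ps_lessThan) auto
  moreover have "ps (cns k m) = sum (cns k m) {..<Suc N}"
  proof (rule ps_lessThan)
    fix i assume "Suc N \<le> i"
    then show "cns k m i = 0" using N by (cases i) auto
  qed
  moreover have "sum (cns k m) {..<Suc N} = k + sum m {..<N}"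
    by (subst sum.lessThan_Suc_shift) simp
  ultimately show ?thesis by simp
qed

lemma ps_shift: "isp l \<Longrightarrow> ps l = l 0 + ps (\<lambda>i. l (Suc i))"
  using ps_cns[OF isp_shift, of l "l 0"] cns_shift[of l] by simp

definition PK :: "nat \<Rightarrow> nat \<Rightarrow> (nat \<Rightarrow> nat) set" where
  "PK n k = {l \<in> PT n. l 0 \<le> k}"

lemma finite_PK: "finite (PK n k)"
  unfolding PK_def using finite_PT by simp

lemma PK_big: "n \<le> k \<Longrightarrow> PK n k = PT n"
proof -
  assume nk: "n \<le> k"
  have "l 0 \<le> k" if "l \<in> PT n" for l
    using that isp_le_ps[of l 0] nk by (auto simp: PT_def)
  then show ?thesis unfolding PK_def by blast
qed

lemma isp_0_zero: "isp l \<Longrightarrow> l 0 = 0 \<Longrightarrow> l = (\<lambda>_. 0)"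
  using isp_mono[of l 0] by fastforce

lemma ps_zero[simp]: "ps (\<lambda>_. 0) = 0" by (simp add: ps_def)
lemma isp_zerof[simp]: "isp (\<lambda>_. 0)" by (simp add: isp_def)

lemma card_PK0: "card (PK n 0) = (if n = 0 then 1 else 0)"
proof -
  have "PK n 0 = (if n = 0 then {\<lambda>_. 0} else {})"
  proof (cases "n = 0")
    case True
    have "l \<in> PK n 0 \<longleftrightarrow> l = (\<lambda>_. 0)" for l
      using isp_0_zero[of l] True by (auto simp: PK_def PT_def)
    then show ?thesis using True by auto
  next
    case False
    have "l \<notin> PK n 0" for l
    proof
      assume "l \<in> PK n 0"
      then have "isp l" "l 0 = 0" "ps l = n" by (auto simp: PK_def PT_def)
      then show False using isp_0_zero[of l] False by simp
    qed
    then show ?thesis using False by auto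
  qed
  then show ?thesis by simp
qed

lemma card_PK_Suc:
  "card (PK n (Suc k)) = card (PK n k) + (if Suc k \<le> n then card (PK (n - Suc k) (Suc k)) else 0)"
proof -
  let ?B = "{l \<in> PT n. l 0 = Suc k}"
  have split: "PK n (Suc k) = PK n k \<union> ?B" unfolding PK_def by auto
  have disj: "PK n k \<inter> ?B = {}" unfolding PK_def by auto
  have finB: "finite ?B" using finite_PT by simp
  have cB: "card ?B = (if Suc k \<le> n then card (PK (n - Suc k) (Suc k)) else 0)"
  proof (cases "Suc k \<le> n")
    case False
    have e: "?B = {}"
    proof (rule ccontr)
      assume "?B \<noteq> {}"
      then obtain l where l: "l \<in> PT n" "l 0 = Suc k" by blast
      then have "l 0 \<le> n" using isp_le_ps[of l 0] by (auto simp: PT_def)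
      then show False using l False by simp
    qed
    show ?thesis using False unfolding e by simp
  next
    case True
    have "bij_betw (\<lambda>l i. l (Suc i)) ?B (PK (n - Suc k) (Suc k))"
    proof (rule bij_betw_byWitness[where f' = "cns (Suc k)"])
      show "\<forall>a\<in>?B. cns (Suc k) (\<lambda>i. a (Suc i)) = a"
      proof
        fix a assume "a \<in> ?B"
        then have "a 0 = Suc k" by simp
        then show "cns (Suc k) (\<lambda>i. a (Suc i)) = a" using cns_shift[of a] by simp
      qed
      show "\<forall>a'\<in>PK (n - Suc k) (Suc k). (\<lambda>i. cns (Suc k) a' (Suc i)) = a'" by simp
      show "(\<lambda>l i. l (Suc i)) ` ?B \<subseteq> PK (n - Suc k) (Suc k)"
      proof
        fix m assume "m \<in> (\<lambda>l i. l (Suc i)) ` ?B"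
        then obtain l where l: "l \<in> PT n" "l 0 = Suc k" and m: "m = (\<lambda>i. l (Suc i))" by blast
        have il: "isp l" "ps l = n" using l by (auto simp: PT_def)
        have "isp m" using isp_shift[OF il(1)] m by simp
        moreover have "ps m = n - Suc k" using ps_shift[OF il(1)] il(2) l(2) m by simp
        moreover have "m 0 \<le> Suc k" using isp_mono[OF il(1), of 0 1] l(2) m by simp
        ultimately show "m \<in> PK (n - Suc k) (Suc k)" by (simp add: PK_def PT_def)
      qed
      show "cns (Suc k) ` PK (n - Suc k) (Suc k) \<subseteq> ?B"
      proof
        fix l assume "l \<in> cns (Suc k) ` PK (n - Suc k) (Suc k)"
        then obtain m where m: "m \<in> PK (n - Suc k) (Suc k)" and l: "l = cns (Suc k) m" by blast
        have im: "isp m" "ps m = n - Suc k" "m 0 \<le> Suc k" using m by (auto simp: PK_def PT_def)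
        have "isp l" using isp_cns[OF im(1) im(3)] l by simp
        moreover have "ps l = n" using ps_cns[OF im(1)] im(2) True l by simp
        ultimately show "l \<in> ?B" using l by (simp add: PT_def)
      qed
    qed
    then show ?thesis using True by (simp add: bij_betw_same_card)
  qed
  show ?thesis unfolding split using card_Un_disjoint[OF finite_PK finB disj] cB by simp
qed

definition PP :: "nat \<Rightarrow> ((nat \<Rightarrow> nat) \<times> (nat \<Rightarrow> nat)) set" where
  "PP n = {(a,b). isp a \<and> isp b \<and> ps a + ps b = n}"

lemma PP_UN: "PP n = (\<Union>k\<in>{..n}. PT k \<times> PT (n - k))"
  unfolding PP_def PT_def by auto

lemma card_PP: "card (PP n) = (\<Sum>k\<le>n. card (PT k) * card (PT (n - k)))"
proof -
  have "card (\<Union>k\<in>{..n}. PT k \<times> PT (n - k)) = (\<Sum>k\<le>n. card (PT k \<times> PT (n - k)))"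
    by (rule card_UN_disjoint) (simp, simp add: finite_PT, auto simp: PT_def)
  then show ?thesis unfolding PP_UN by (simp add: card_cartesian_product)
qed

lemma finite_PP: "finite (PP n)"
  unfolding PP_UN by (auto simp: finite_PT)

definition al :: "nat \<Rightarrow> (nat \<Rightarrow> nat) \<Rightarrow> (nat \<Rightarrow> nat) \<Rightarrow> nat \<Rightarrow> nat" where
  "al t a b = (\<lambda>i. if i \<le> t then b i - 1 else a (i - 1))"
definition be :: "nat \<Rightarrow> (nat \<Rightarrow> nat) \<Rightarrow> (nat \<Rightarrow> nat) \<Rightarrow> nat \<Rightarrow> nat" where
  "be t a b = (\<lambda>i. if i < t then a i + 1 else b (Suc i))"
definition ga :: "nat \<Rightarrow> (nat \<Rightarrow> nat) \<Rightarrow> (nat \<Rightarrow> nat) \<Rightarrow> nat \<Rightarrow> nat" where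
  "ga s x y = (\<lambda>i. if i < s then y i - 1 else x (Suc i))"
definition de :: "nat \<Rightarrow> (nat \<Rightarrow> nat) \<Rightarrow> (nat \<Rightarrow> nat) \<Rightarrow> nat \<Rightarrow> nat" where
  "de s x y = (\<lambda>i. if i \<le> s then x i + 1 else y (i - 1))"

locale cross =
  fixes a b t
  assumes ia: "isp a" and ib: "isp b" and tc: "a t < b t" and tb: "\<And>i. i < t \<Longrightarrow> b i \<le> a i"
begin

lemma b_pos: "i \<le> t \<Longrightarrow> 1 \<le> b i"
  using isp_mono[OF ib, of i t] tc by simp

lemma isp_al: "isp (al t a b)"
  unfolding isp_def
proof (intro conjI allI)
  fix i show "al t a b (Suc i) \<le> al t a b i"
  proof (cases "Suc i \<le> t")
    case True then show ?thesis using isp_mono[OF ib, of i "Suc i"] by (simp add: al_def)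
  next
    case False
    show ?thesis
    proof (cases "i = t")
      case True then show ?thesis using tc by (simp add: al_def)
    next
      case False
      then have "t < i" using \<open>\<not> Suc i \<le> t\<close> by simp
      then show ?thesis using isp_mono[OF ia, of "i - 1" i] by (simp add: al_def)
    qed
  qed
next
  obtain N where N: "\<forall>i\<ge>N. a i = 0" using isp_zero[OF ia] by blast
  have "al t a b (Suc (N + t)) = 0" using N by (simp add: al_def)
  then show "\<exists>N. al t a b N = 0" by blast
qed

lemma isp_be: "isp (be t a b)"
  unfolding isp_def
proof (intro conjI allI)
  fix i show "be t a b (Suc i) \<le> be t a b i"
  proof (cases "Suc i < t")
    case True then show ?thesis using isp_mono[OF ia, of i "Suc i"] by (simp add: be_def)
  next
    case False
    show ?thesis
    proof (cases "Suc i = t")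
      case True
      have "b (Suc (Suc i)) \<le> b i" using isp_mono[OF ib, of i "Suc (Suc i)"] by simp
      moreover have "b i \<le> a i" using tb True by simp
      ultimately show ?thesis using True by (simp add: be_def)
    next
      case False
      then have "t \<le> i" using \<open>\<not> Suc i < t\<close> by simp
      then show ?thesis using isp_mono[OF ib, of "Suc i" "Suc (Suc i)"] by (simp add: be_def)
    qed
  qed
next
  obtain N where N: "\<forall>i\<ge>N. b i = 0" using isp_zero[OF ib] by blast
  have "be t a b (N + t) = 0" using N by (simp add: be_def)
  then show "\<exists>N. be t a b N = 0" by blast
qed

lemma size_fwd: "ps (al t a b) + ps (be t a b) + 1 = ps a + ps b"
proof -
  obtain N where N: "\<forall>i\<ge>N. a i = 0 \<and> b i = 0"
    using isp_zero[OF ia] isp_zero[OF ib] by (metis le_trans nat_le_linear)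
  define K where "K = N"
  have za: "a i = 0" if "t + 1 + K \<le> i" for i using N that K_def by simp
  have zb: "b i = 0" if "t + 1 + K \<le> i" for i using N that K_def by simp
  have pa: "ps a = sum a {..<t + (1 + K)}" by (rule ps_lessThan) (simp add: za)
  have pb: "ps b = sum b {..<(t+1) + (1 + K)}" by (rule ps_lessThan) (simp add: zb)
  have pal: "ps (al t a b) = sum (al t a b) {..<(t+1) + (K + 1)}"
    by (rule ps_lessThan) (simp add: al_def za)
  have pbe: "ps (be t a b) = sum (be t a b) {..<t + (1 + K)}"
    by (rule ps_lessThan) (simp add: be_def zb)
  have s1: "sum (al t a b) {..<(t+1) + (K + 1)} = (\<Sum>i<t+1. b i - 1) + (\<Sum>i<K+1. a (t + i))"
    unfolding sum_lessThan_add by (simp add: al_def)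
  have s2: "sum (be t a b) {..<t + (1 + K)} = (\<Sum>i<t. a i + 1) + (\<Sum>i<1+K. b ((t+1) + i))"
    unfolding sum_lessThan_add by (simp add: be_def)
  have s3: "sum a {..<t + (1 + K)} = sum a {..<t} + (\<Sum>i<1+K. a (t + i))"
    by (rule sum_lessThan_add)
  have s4: "sum b {..<(t+1) + (1 + K)} = sum b {..<t+1} + (\<Sum>i<1+K. b ((t+1) + i))"
    by (rule sum_lessThan_add)
  have s5: "(\<Sum>i<t+1. b i - 1) + (t + 1) = sum b {..<t+1}"
  proof -
    have "(\<Sum>i<t+1. (b i - 1) + 1) = (\<Sum>i<t+1. b i - 1) + (\<Sum>i<t+1. 1)" by (rule sum.distrib)
    then have "(\<Sum>i<t+1. b i - 1) + (t + 1) = (\<Sum>i<t+1. (b i - 1) + 1)" by simp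
    also have "\<dots> = sum b {..<t+1}"
    proof (rule sum.cong)
      fix i assume "i \<in> {..<t+1}"
      then have "1 \<le> b i" using b_pos by simp
      then show "b i - 1 + 1 = b i" by simp
    qed simp
    finally show ?thesis .
  qed
  have s6: "(\<Sum>i<t. a i + 1) = sum a {..<t} + t"
    by (subst sum.distrib) simp
  show ?thesis unfolding pa pb pal pbe s1 s2 s3 s4 using s5 s6 by (simp add: add.commute)
qed

lemma least_bwd: "(LEAST i. be t a b i < al t a b i + 2) = t"
proof (rule Least_equality)
  show "be t a b t < al t a b t + 2"
    using isp_mono[OF ib, of t "Suc t"] b_pos[of t] by (simp add: al_def be_def)
next
  fix y assume y: "be t a b y < al t a b y + 2"
  show "t \<le> y"
  proof (rule ccontr)
    assume "\<not> t \<le> y"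
    then have "y < t" by simp
    then have "be t a b y = a y + 1" "al t a b y = b y - 1" by (simp_all add: al_def be_def)
    moreover have "b y \<le> a y" "1 \<le> b y" using tb[OF \<open>y < t\<close>] b_pos[of y] \<open>y < t\<close> by simp_all
    ultimately show False using y by simp
  qed
qed

lemma ga_fwd: "ga t (al t a b) (be t a b) = a"
  by (rule ext) (simp add: ga_def al_def be_def)

lemma de_fwd: "de t (al t a b) (be t a b) = b"
proof (rule ext)
  fix i show "de t (al t a b) (be t a b) i = b i"
  proof (cases "i \<le> t")
    case True then show ?thesis using b_pos[OF True] by (simp add: de_def al_def)
  next
    case False
    then have "\<not> i - 1 < t" "Suc (i - 1) = i" by auto
    then show ?thesis using False by (simp add: de_def be_def)
  qed
qed

end

locale crossb =
  fixes x y s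
  assumes ix: "isp x" and iy: "isp y" and sc: "y s < x s + 2" and sb: "\<And>i. i < s \<Longrightarrow> x i + 2 \<le> y i"
begin

lemma isp_ga: "isp (ga s x y)"
  unfolding isp_def
proof (intro conjI allI)
  fix i show "ga s x y (Suc i) \<le> ga s x y i"
  proof (cases "Suc i < s")
    case True then show ?thesis using isp_mono[OF iy, of i "Suc i"] by (simp add: ga_def)
  next
    case False
    show ?thesis
    proof (cases "Suc i = s")
      case True
      have "x (Suc (Suc i)) \<le> x i" using isp_mono[OF ix, of i "Suc (Suc i)"] by simp
      moreover have "x i + 2 \<le> y i" using sb True by simp
      ultimately show ?thesis using True by (simp add: ga_def)
    next
      case False
      then have "s \<le> i" using \<open>\<not> Suc i < s\<close> by simp
      then show ?thesis using isp_mono[OF ix, of "Suc i" "Suc (Suc i)"] by (simp add: ga_def)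
    qed
  qed
next
  obtain N where N: "\<forall>i\<ge>N. x i = 0" using isp_zero[OF ix] by blast
  have "ga s x y (N + s) = 0" using N by (simp add: ga_def)
  then show "\<exists>N. ga s x y N = 0" by blast
qed

lemma isp_de: "isp (de s x y)"
  unfolding isp_def
proof (intro conjI allI)
  fix i show "de s x y (Suc i) \<le> de s x y i"
  proof (cases "Suc i \<le> s")
    case True then show ?thesis using isp_mono[OF ix, of i "Suc i"] by (simp add: de_def)
  next
    case False
    show ?thesis
    proof (cases "i = s")
      case True then show ?thesis using sc by (simp add: de_def)
    next
      case False
      then have "s < i" using \<open>\<not> Suc i \<le> s\<close> by simp
      then show ?thesis using isp_mono[OF iy, of "i - 1" i] by (simp add: de_def)
    qed
  qed
next
  obtain N where N: "\<forall>i\<ge>N. y i = 0" using isp_zero[OF iy] by blast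
  have "de s x y (Suc (N + s)) = 0" using N by (simp add: de_def)
  then show "\<exists>N. de s x y N = 0" by blast
qed

lemma cross_bwd: "cross (ga s x y) (de s x y) s"
proof
  show "isp (ga s x y)" by (rule isp_ga)
  show "isp (de s x y)" by (rule isp_de)
  show "ga s x y s < de s x y s"
    using isp_mono[OF ix, of s "Suc s"] by (simp add: ga_def de_def)
  fix i assume "i < s"
  then show "de s x y i \<le> ga s x y i" using sb[OF \<open>i < s\<close>] by (simp add: ga_def de_def)
qed

lemma al_bwd: "al s (ga s x y) (de s x y) = x"
proof (rule ext)
  fix i show "al s (ga s x y) (de s x y) i = x i"
  proof (cases "i \<le> s")
    case True then show ?thesis by (simp add: de_def al_def)
  next
    case False
    then have "\<not> i - 1 < s" "Suc (i - 1) = i" by auto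
    then show ?thesis using False by (simp add: al_def ga_def)
  qed
qed

lemma be_bwd: "be s (ga s x y) (de s x y) = y"
proof (rule ext)
  fix i show "be s (ga s x y) (de s x y) i = y i"
  proof (cases "i < s")
    case True then show ?thesis using sb[OF True] by (simp add: be_def ga_def)
  next
    case False then show ?thesis by (simp add: be_def de_def)
  qed
qed

end

lemma (in cross) least_t: "(LEAST i. a i < b i) = t"
  by (rule Least_equality) (use tc tb in \<open>auto simp: not_less[symmetric]\<close>)

definition NP :: "nat \<Rightarrow> ((nat \<Rightarrow> nat) \<times> (nat \<Rightarrow> nat)) set" where
  "NP n = {(a,b). isp a \<and> isp b \<and> ps a + ps b = n \<and> (\<forall>i. b i \<le> a i)}"

definition CR :: "nat \<Rightarrow> ((nat \<Rightarrow> nat) \<times> (nat \<Rightarrow> nat)) set" where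
  "CR n = {(a,b). isp a \<and> isp b \<and> ps a + ps b = n \<and> (\<exists>i. a i < b i)}"

definition fwd where
  "fwd p = (let a = fst p; b = snd p; t = (LEAST i. a i < b i) in (al t a b, be t a b))"
definition bwd where
  "bwd p = (let x = fst p; y = snd p; s = (LEAST i. y i < x i + 2) in (ga s x y, de s x y))"

lemma cross_of: "isp a \<Longrightarrow> isp b \<Longrightarrow> \<exists>i. a i < b i \<Longrightarrow> cross a b (LEAST i. a i < b i)"
proof -
  assume a: "isp a" "isp b" "\<exists>i. a i < b i"
  show ?thesis
  proof
    show "isp a" "isp b" by fact+
    show "a (LEAST i. a i < b i) < b (LEAST i. a i < b i)" using a(3) by (rule LeastI_ex)
    fix i assume "i < (LEAST i. a i < b i)"
    then have "\<not> a i < b i" by (rule not_less_Least)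
    then show "b i \<le> a i" by simp
  qed
qed

lemma crossb_of: "isp x \<Longrightarrow> isp y \<Longrightarrow> crossb x y (LEAST i. y i < x i + 2)"
proof -
  assume a: "isp x" "isp y"
  obtain N where "y N = 0" using a(2) unfolding isp_def by blast
  then have ex: "\<exists>i. y i < x i + 2" by (intro exI[of _ N]) simp
  show ?thesis
  proof
    show "isp x" "isp y" by fact+
    show "y (LEAST i. y i < x i + 2) < x (LEAST i. y i < x i + 2) + 2" using ex by (rule LeastI_ex)
    fix i assume "i < (LEAST i. y i < x i + 2)"
    then have "\<not> y i < x i + 2" by (rule not_less_Least)
    then show "x i + 2 \<le> y i" by simp
  qed
qed

lemma bij_CR: "bij_betw fwd (CR (Suc n)) (PP n)"
proof (rule bij_betw_byWitness[where f' = bwd])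
  show "\<forall>p\<in>CR (Suc n). bwd (fwd p) = p"
  proof
    fix p assume "p \<in> CR (Suc n)"
    then obtain a b where p: "p = (a,b)" "isp a" "isp b" "\<exists>i. a i < b i" by (auto simp: CR_def)
    define t where "t = (LEAST i. a i < b i)"
    have c: "cross a b t" unfolding t_def using cross_of p by simp
    have f: "fwd p = (al t a b, be t a b)" unfolding p by (simp add: fwd_def t_def Let_def)
    have "bwd (al t a b, be t a b) = (ga t (al t a b) (be t a b), de t (al t a b) (be t a b))"
      using cross.least_bwd[OF c] by (simp add: bwd_def Let_def)
    then show "bwd (fwd p) = p"
      unfolding f using cross.ga_fwd[OF c] cross.de_fwd[OF c] p by simp
  qed
  show "\<forall>p\<in>PP n. fwd (bwd p) = p"
  proof
    fix p assume "p \<in> PP n"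
    then obtain x y where p: "p = (x,y)" "isp x" "isp y" by (auto simp: PP_def)
    define s where "s = (LEAST i. y i < x i + 2)"
    have c: "crossb x y s" unfolding s_def using crossb_of p by simp
    have c2: "cross (ga s x y) (de s x y) s" by (rule crossb.cross_bwd[OF c])
    have f: "bwd p = (ga s x y, de s x y)" unfolding p by (simp add: bwd_def s_def Let_def)
    have "fwd (ga s x y, de s x y) = (al s (ga s x y) (de s x y), be s (ga s x y) (de s x y))"
      using cross.least_t[OF c2] by (simp add: fwd_def Let_def)
    then show "fwd (bwd p) = p"
      unfolding f using crossb.al_bwd[OF c] crossb.be_bwd[OF c] p by simp
  qed
  show "fwd ` CR (Suc n) \<subseteq> PP n"
  proof
    fix q assume "q \<in> fwd ` CR (Suc n)"
    then obtain p where pq: "q = fwd p" and "p \<in> CR (Suc n)" by blast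
    then obtain a b where p: "p = (a,b)" "isp a" "isp b" "\<exists>i. a i < b i" "ps a + ps b = Suc n"
      by (auto simp: CR_def)
    define t where "t = (LEAST i. a i < b i)"
    have c: "cross a b t" unfolding t_def using cross_of p by simp
    have "q = (al t a b, be t a b)" unfolding pq p by (simp add: fwd_def Let_def t_def)
    then show "q \<in> PP n" using cross.isp_al[OF c] cross.isp_be[OF c] cross.size_fwd[OF c] p(5)
      by (simp add: PP_def)
  qed
  show "bwd ` PP n \<subseteq> CR (Suc n)"
  proof
    fix q assume "q \<in> bwd ` PP n"
    then obtain p where pq: "q = bwd p" and "p \<in> PP n" by blast
    then obtain x y where p: "p = (x,y)" "isp x" "isp y" "ps x + ps y = n" by (auto simp: PP_def)
    define s where "s = (LEAST i. y i < x i + 2)"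
    have c: "crossb x y s" unfolding s_def using crossb_of p by simp
    have c2: "cross (ga s x y) (de s x y) s" by (rule crossb.cross_bwd[OF c])
    have "q = (ga s x y, de s x y)" unfolding pq p by (simp add: bwd_def Let_def s_def)
    moreover have "ps (ga s x y) + ps (de s x y) = Suc n"
      using cross.size_fwd[OF c2] crossb.al_bwd[OF c] crossb.be_bwd[OF c] p(4) by simp
    moreover have "ga s x y s < de s x y s" using cross.tc[OF c2] .
    ultimately show "q \<in> CR (Suc n)" using cross.ia[OF c2] cross.ib[OF c2]
      by (auto simp: CR_def)
  qed
qed

lemma CR_0: "CR 0 = {}"
proof -
  have "p \<notin> CR 0" for p
  proof
    assume "p \<in> CR 0"
    then obtain a b i where "isp b" "ps b = 0" "a i < b i" by (auto simp: CR_def)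
    then show False using isp_le_ps[of b i] by simp
  qed
  then show ?thesis by blast
qed

lemma card_PP_rec: "card (PP n) = card (NP n) + (if n = 0 then 0 else card (PP (n - 1)))"
proof -
  have split: "PP n = NP n \<union> CR n" unfolding PP_def NP_def CR_def using not_less by auto
  have disj: "NP n \<inter> CR n = {}" unfolding NP_def CR_def using not_less by auto
  have fin: "finite (NP n)" "finite (CR n)"
    using finite_PP[of n] split by (auto intro: finite_subset)
  have "card (CR n) = (if n = 0 then 0 else card (PP (n - 1)))"
  proof (cases n)
    case 0 then show ?thesis by (simp add: CR_0)
  next
    case (Suc m) then show ?thesis using bij_betw_same_card[OF bij_CR[of m]] by simp
  qed
  then show ?thesis unfolding split using card_Un_disjoint[OF fin disj] by simp
qed

definition gpp :: "(nat \<Rightarrow> nat) \<Rightarrow> (nat \<Rightarrow> nat) \<Rightarrow> nat \<Rightarrow> nat \<Rightarrow> nat" where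
  "gpp a b = (\<lambda>i j. if j < b i then 2 else if j < a i then 1 else 0)"

definition lam :: "(nat \<Rightarrow> nat \<Rightarrow> nat) \<Rightarrow> nat \<Rightarrow> nat" where
  "lam f i = card {j. f i j \<noteq> 0}"
definition mu :: "(nat \<Rightarrow> nat \<Rightarrow> nat) \<Rightarrow> nat \<Rightarrow> nat" where
  "mu f i = card {j. 2 \<le> f i j}"

lemma downclosed:
  assumes "finite S" "\<And>j j'. j \<in> S \<Longrightarrow> j' \<le> j \<Longrightarrow> j' \<in> S"
  shows "S = {..<card S}"
proof (cases "S = {}")
  case True then show ?thesis by simp
next
  case False
  have "S = {..Max S}"
  proof
    show "S \<subseteq> {..Max S}" using assms(1) by auto
    show "{..Max S} \<subseteq> S" using assms(2) Max_in[OF assms(1) False] by auto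
  qed
  then show ?thesis by (metis card_atMost lessThan_Suc_atMost)
qed

lemma pp_size_gpp:
  assumes "isp a" "isp b" "\<And>i. b i \<le> a i"
  shows "pp_size (gpp a b) = ps a + ps b"
proof -
  obtain N where N: "\<forall>i\<ge>N. a i = 0" using isp_zero[OF assms(1)] by blast
  have supp: "{(i, j). gpp a b i j \<noteq> 0} = (SIGMA i:{..<N}. {..<a i})"
  proof (intro set_eqI iffI)
    fix p assume "p \<in> {(i, j). gpp a b i j \<noteq> 0}"
    then obtain i j where p: "p = (i,j)" "gpp a b i j \<noteq> 0" by blast
    then have "j < a i" using assms(3)[of i] by (auto simp: gpp_def split: if_splits)
    moreover then have "i < N" using N by (metis not_le less_zeroE)
    ultimately show "p \<in> (SIGMA i:{..<N}. {..<a i})" using p by simp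
  next
    fix p assume "p \<in> (SIGMA i:{..<N}. {..<a i})"
    then show "p \<in> {(i, j). gpp a b i j \<noteq> 0}" by (auto simp: gpp_def)
  qed
  have inner: "(\<Sum>j<a i. gpp a b i j) = a i + b i" for i
  proof -
    have ai: "a i = b i + (a i - b i)" using assms(3)[of i] by simp
    have "(\<Sum>j<a i. gpp a b i j) = (\<Sum>j<b i + (a i - b i). gpp a b i j)" using ai by simp
    also have "\<dots> = (\<Sum>j<b i. gpp a b i j) + (\<Sum>j<a i - b i. gpp a b i (b i + j))"
      by (rule sum_lessThan_add)
    also have "(\<Sum>j<b i. gpp a b i j) = (\<Sum>j<b i. 2)" by (rule sum.cong) (auto simp: gpp_def)
    also have "(\<Sum>j<a i - b i. gpp a b i (b i + j)) = (\<Sum>j<a i - b i. 1)"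
      by (rule sum.cong) (auto simp: gpp_def)
    finally show ?thesis using assms(3)[of i] by simp
  qed
  have "pp_size (gpp a b) = (\<Sum>i<N. \<Sum>j<a i. gpp a b i j)"
    unfolding pp_size_def supp by (rule sum.Sigma[symmetric]) auto
  also have "\<dots> = (\<Sum>i<N. a i + b i)" using inner by simp
  also have "\<dots> = sum a {..<N} + sum b {..<N}" by (rule sum.distrib)
  also have "sum a {..<N} = ps a" using N by (intro ps_lessThan[symmetric]) auto
  also have "sum b {..<N} = ps b" using N assms(3) by (intro ps_lessThan[symmetric]) (metis le_zero_eq)
  finally show ?thesis .
qed

lemma pp_gpp:
  assumes "isp a" "isp b" "\<And>i. b i \<le> a i"
  shows "plane_partition (gpp a b)"
  unfolding plane_partition_def
proof (intro conjI allI)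
  fix i j
  show "gpp a b (Suc i) j \<le> gpp a b i j"
    using isp_mono[OF assms(1), of i "Suc i"] isp_mono[OF assms(2), of i "Suc i"]
    by (auto simp: gpp_def)
  show "gpp a b i (Suc j) \<le> gpp a b i j"
    using assms(3)[of i] by (auto simp: gpp_def)
next
  obtain N where N: "\<forall>i\<ge>N. a i = 0" using isp_zero[OF assms(1)] by blast
  have "{(i, j). gpp a b i j \<noteq> 0} \<subseteq> {..<N} \<times> {..<a 0}"
  proof
    fix p assume "p \<in> {(i, j). gpp a b i j \<noteq> 0}"
    then obtain i j where p: "p = (i,j)" "gpp a b i j \<noteq> 0" by blast
    then have ji: "j < a i" using assms(3)[of i] by (auto simp: gpp_def split: if_splits)
    then have "i < N" using N by (metis not_le less_zeroE)
    moreover have "a i \<le> a 0" using isp_mono[OF assms(1), of 0 i] by simp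
    ultimately show "p \<in> {..<N} \<times> {..<a 0}" using p ji by simp
  qed
  then show "finite {(i, j). gpp a b i j \<noteq> 0}" by (rule finite_subset) simp
qed

locale ppf =
  fixes f :: "nat \<Rightarrow> nat \<Rightarrow> nat"
  assumes pp: "plane_partition f" and le2: "\<And>i j. f i j \<le> 2"
begin

lemma mono_j: "j' \<le> j \<Longrightarrow> f i j \<le> f i j'"
  using pp unfolding plane_partition_def by (metis lift_Suc_antimono_le)

lemma mono_i: "i' \<le> i \<Longrightarrow> f i j \<le> f i' j"
proof -
  have "\<And>k. f (Suc k) j \<le> f k j" using pp unfolding plane_partition_def by blast
  then show "i' \<le> i \<Longrightarrow> f i j \<le> f i' j" by (rule lift_Suc_antimono_le[where f = "\<lambda>k. f k j"])
qed

lemma fin_supp: "finite {(i, j). f i j \<noteq> 0}"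
  using pp unfolding plane_partition_def by blast

lemma fin_row: "finite {j. f i j \<noteq> 0}"
proof -
  have "{j. f i j \<noteq> 0} \<subseteq> snd ` {(i, j). f i j \<noteq> 0}" by force
  then show ?thesis using fin_supp by (metis finite_imageI finite_subset)
qed

lemma fin_row2: "finite {j. 2 \<le> f i j}"
  by (rule finite_subset[OF _ fin_row[of i]]) auto

lemma row_eq: "{j. f i j \<noteq> 0} = {..<lam f i}"
  unfolding lam_def
proof (rule downclosed[OF fin_row])
  fix j j' assume "j \<in> {j. f i j \<noteq> 0}" "j' \<le> j"
  then show "j' \<in> {j. f i j \<noteq> 0}" using mono_j[of j' j i] by simp
qed

lemma row2_eq: "{j. 2 \<le> f i j} = {..<mu f i}"
  unfolding mu_def
proof (rule downclosed[OF fin_row2])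
  fix j j' assume "j \<in> {j. 2 \<le> f i j}" "j' \<le> j"
  then show "j' \<in> {j. 2 \<le> f i j}" using mono_j[of j' j i] by simp
qed

lemma mu_le: "mu f i \<le> lam f i"
  unfolding lam_def mu_def by (rule card_mono[OF fin_row]) auto

lemma f_eq: "f = gpp (lam f) (mu f)"
proof (intro ext)
  fix i j
  have a: "f i j \<noteq> 0 \<longleftrightarrow> j < lam f i" using row_eq[of i] by blast
  have b: "2 \<le> f i j \<longleftrightarrow> j < mu f i" using row2_eq[of i] by blast
  show "f i j = gpp (lam f) (mu f) i j"
    using a b le2[of i j] by (auto simp: gpp_def)
qed

lemma bound: "\<exists>N. \<forall>i\<ge>N. lam f i = 0"
proof -
  obtain N where N: "\<forall>n\<in>fst ` {(i, j). f i j \<noteq> 0}. n < N"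
    using finite_imageI[OF fin_supp, of fst] unfolding finite_nat_set_iff_bounded by blast
  have "lam f i = 0" if "N \<le> i" for i
  proof -
    have "{j. f i j \<noteq> 0} = {}"
    proof (rule ccontr)
      assume "{j. f i j \<noteq> 0} \<noteq> {}"
      then obtain j where "f i j \<noteq> 0" by blast
      then have "i \<in> fst ` {(i, j). f i j \<noteq> 0}" by force
      then show False using N that by auto
    qed
    then show ?thesis by (simp add: lam_def)
  qed
  then show ?thesis by blast
qed

lemma isp_lam: "isp (lam f)"
  unfolding isp_def
proof (intro conjI allI)
  fix i
  have "{j. f (Suc i) j \<noteq> 0} \<subseteq> {j. f i j \<noteq> 0}"
  proof
    fix j assume "j \<in> {j. f (Suc i) j \<noteq> 0}"
    then show "j \<in> {j. f i j \<noteq> 0}" using mono_i[of i "Suc i" j] by simp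
  qed
  then show "lam f (Suc i) \<le> lam f i"
    unfolding lam_def by (intro card_mono[OF fin_row])
next
  show "\<exists>N. lam f N = 0" using bound by blast
qed

lemma isp_mu: "isp (mu f)"
  unfolding isp_def
proof (intro conjI allI)
  fix i
  have "{j. 2 \<le> f (Suc i) j} \<subseteq> {j. 2 \<le> f i j}"
  proof
    fix j assume "j \<in> {j. 2 \<le> f (Suc i) j}"
    then show "j \<in> {j. 2 \<le> f i j}" using mono_i[of i "Suc i" j] by simp
  qed
  then show "mu f (Suc i) \<le> mu f i"
    unfolding mu_def by (intro card_mono[OF fin_row2])
next
  obtain N where "\<forall>i\<ge>N. lam f i = 0" using bound by blast
  then have "mu f N = 0" using mu_le[of N] by simp
  then show "\<exists>N. mu f N = 0" by blast
qed

end

lemma lam_gpp: "(\<And>i. b i \<le> a i) \<Longrightarrow> lam (gpp a b) = a"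
proof (rule ext)
  fix i assume h: "\<And>i. b i \<le> a i"
  have "{j. gpp a b i j \<noteq> 0} = {..<a i}" using h[of i] by (auto simp: gpp_def)
  then show "lam (gpp a b) i = a i" by (simp add: lam_def)
qed

lemma mu_gpp: "mu (gpp a b) = b"
proof (rule ext)
  fix i
  have "{j. 2 \<le> gpp a b i j} = {..<b i}" by (auto simp: gpp_def)
  then show "mu (gpp a b) i = b i" by (simp add: mu_def)
qed

lemma pl2_NP: "pl2 n = card (NP n)"
proof -
  let ?PL = "{f. plane_partition f \<and> (\<forall>i j. f i j \<le> 2) \<and> pp_size f = n}"
  have "bij_betw (\<lambda>p. gpp (fst p) (snd p)) (NP n) ?PL"
  proof (rule bij_betw_byWitness[where f' = "\<lambda>f. (lam f, mu f)"])
    show "\<forall>p\<in>NP n. (lam (gpp (fst p) (snd p)), mu (gpp (fst p) (snd p))) = p"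
      by (auto simp: NP_def lam_gpp mu_gpp)
    show "\<forall>f\<in>?PL. gpp (fst (lam f, mu f)) (snd (lam f, mu f)) = f"
      using ppf.f_eq ppf.intro by auto
    show "(\<lambda>p. gpp (fst p) (snd p)) ` NP n \<subseteq> ?PL"
    proof
      fix f assume "f \<in> (\<lambda>p. gpp (fst p) (snd p)) ` NP n"
      then obtain a b where f: "f = gpp a b" and ab: "isp a" "isp b" "ps a + ps b = n" "\<And>i. b i \<le> a i"
        by (auto simp: NP_def)
      show "f \<in> ?PL" using pp_gpp[OF ab(1,2,4)] pp_size_gpp[OF ab(1,2,4)] ab(3) f
        by (auto simp: gpp_def)
    qed
    show "(\<lambda>f. (lam f, mu f)) ` ?PL \<subseteq> NP n"
    proof
      fix p assume "p \<in> (\<lambda>f. (lam f, mu f)) ` ?PL"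
      then obtain f where p: "p = (lam f, mu f)" and f: "plane_partition f" "\<forall>i j. f i j \<le> 2" "pp_size f = n"
        by blast
      interpret ppf f using f by (unfold_locales) auto
      have "pp_size f = ps (lam f) + ps (mu f)"
        using pp_size_gpp[OF isp_lam isp_mu mu_le] f_eq by simp
      then show "p \<in> NP n" using p f(3) isp_lam isp_mu mu_le by (simp add: NP_def)
    qed
  qed
  then show ?thesis unfolding pl2_def by (simp add: bij_betw_same_card)
qed

definition Pk :: "nat \<Rightarrow> int fps" where "Pk k = Abs_fps (\<lambda>n. int (card (PK n k)))"
definition PF :: "int fps" where "PF = Abs_fps (\<lambda>n. int (card (PT n)))"
definition P2 :: "int fps" where "P2 = Abs_fps (\<lambda>n. int (card (PP n)))"
definition QF :: "int fps" where "QF = Abs_fps (\<lambda>n. int (pl2 n))"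

lemma Pk_0: "Pk 0 = 1"
  by (rule fps_ext) (simp add: Pk_def card_PK0)

lemma Pk_rec: "Pk (Suc k) * (1 - fps_X^Suc k) = Pk k"
proof (rule fps_ext)
  fix n
  have "(Pk (Suc k) * (1 - fps_X^Suc k)) $ n = Pk (Suc k) $ n - (fps_X^Suc k * Pk (Suc k)) $ n"
    by (simp add: algebra_simps)
  also have "\<dots> = int (card (PK n (Suc k))) - (if Suc k \<le> n then int (card (PK (n - Suc k) (Suc k))) else 0)"
    by (simp add: fps_X_power_mult_nth Pk_def del: power_Suc)
  also have "\<dots> = int (card (PK n k))" using card_PK_Suc[of n k] by simp
  finally show "(Pk (Suc k) * (1 - fps_X^Suc k)) $ n = Pk k $ n" by (simp add: Pk_def)
qed

lemma Pk_Ep: "Pk k * Ep k = 1"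
proof (induction k)
  case 0 then show ?case by (simp add: Pk_0)
next
  case (Suc k)
  have "Pk (Suc k) * Ep (Suc k) = (Pk (Suc k) * (1 - fps_X^Suc k)) * Ep k"
    by (simp only: Ep_Suc mult_ac)
  also have "\<dots> = Pk k * Ep k" by (simp only: Pk_rec)
  finally show ?case using Suc by simp
qed

lemma agree_PF: "agree m PF (Pk m)"
  unfolding agree_def PF_def Pk_def using PK_big by simp

lemma PF_E: "PF * E = 1"
proof (rule fps_ext)
  fix m
  have "agree m (PF * E) (Pk m * Ep m)"
    by (intro agree_mult agree_PF agree_E) simp
  then show "(PF * E) $ m = 1 $ m" using Pk_Ep by (simp add: agree_def)
qed

lemma P2_eq: "P2 = PF * PF"
proof (rule fps_ext)
  fix n
  show "P2 $ n = (PF * PF) $ n"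
    unfolding fps_mult_nth P2_def PF_def using card_PP[of n]
    by (simp add: atLeast0AtMost)
qed

lemma QF_eq: "QF = (1 - fps_X) * P2"
proof (rule fps_ext)
  fix n
  have "((1 - fps_X) * P2) $ n = P2 $ n - (if n = 0 then 0 else P2 $ (n - 1))"
    by (simp add: algebra_simps fps_X_mult_nth)
  also have "\<dots> = int (card (NP n))" using card_PP_rec[of n] by (simp add: P2_def)
  finally show "QF $ n = ((1 - fps_X) * P2) $ n" by (simp add: QF_def pl2_NP)
qed

lemma QF_E2: "QF * E^2 = 1 - fps_X"
proof -
  have "QF * E^2 = (1 - fps_X) * ((PF * E) * (PF * E))"
    unfolding QF_eq P2_eq by (simp add: power2_eq_square algebra_simps)
  then show ?thesis using PF_E by simp
qed

theorem theorem4: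
  fixes n :: nat
  shows "pl2 (5 * n + 3) mod 5 = 0 \<and> pl2 (5 * n + 4) mod 5 = 0"
proof -
  have "(5::int) dvd QF $ (5*n+3)" by (rule final_mod5[OF QF_E2]) simp
  moreover have "(5::int) dvd QF $ (5*n+4)" by (rule final_mod5[OF QF_E2]) simp
  ultimately have "(5::int) dvd int (pl2 (5*n+3))" "(5::int) dvd int (pl2 (5*n+4))"
    by (simp_all add: QF_def)
  then show ?thesis by (simp add: dvd_eq_mod_eq_0[symmetric]) (metis of_nat_dvd_iff of_nat_numeral)
qed

end
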